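(* Let $X$ be a continuum that is $d(X)$-Baire. Then the union of any nest (family totally ordered by inclusion) of closed nowhere dense subsets of $X$ is not equal to $X$.
   Context: A continuum is a nondegenerate compact connected Hausdorff space. $d(X)$ is the least cardinality of a dense subset of $X$; $X$ is $\alpha$-Baire if every family of $\alpha$ many open dense subsets of $X$ has dense intersection. *)

theory Defs
  imports "HOL-Analysis.Analysis"
begin

definition continuum :: "'a topology \<Rightarrow> bool" where
  "continuum X \<longleftrightarrow> compact_space X \<and> connected_space X \<and> Hausdorff_space X
     \<and> (\<exists>x\<in>topspace X. \<exists>y\<in>topspace X. x \<noteq> y)"

definition dense_in :: "'a topology \<Rightarrow> 'a set \<Rightarrow> bool" where
  "dense_in X D \<longleftrightarrow> D \<subseteq> topspace X \<and> X closure_of D = topspace X"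

definition nowhere_dense_in :: "'a topology \<Rightarrow> 'a set \<Rightarrow> bool" where
  "nowhere_dense_in X S \<longleftrightarrow> S \<subseteq> topspace X \<and> X interior_of (X closure_of S) = {}"

text \<open>D is a dense subset of least cardinality, i.e. card_of D represents d(X).\<close>
definition density_witness :: "'a topology \<Rightarrow> 'a set \<Rightarrow> bool" where
  "density_witness X D \<longleftrightarrow> dense_in X D \<and>
     (\<forall>D'. dense_in X D' \<longrightarrow> ordLeq3 (card_of D) (card_of D'))"

text \<open>X is kappa-Baire where kappa = |K|: every family of at most kappa many open dense
  subsets has dense intersection.\<close>
definition card_Baire :: "'a topology \<Rightarrow> 'b set \<Rightarrow> bool" where
  "card_Baire X K \<longleftrightarrow> (\<forall>\<F>. (\<forall>U\<in>\<F>. openin X U \<and> dense_in X U) \<and> ordLeq3 (card_of \<F>) (card_of K)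
        \<longrightarrow> dense_in X (topspace X \<inter> \<Inter>\<F>))"

definition density_Baire :: "'a topology \<Rightarrow> bool" where
  "density_Baire X \<longleftrightarrow> (\<exists>D. density_witness X D \<and> card_Baire X D)"

end

theory Submission
  imports Defs
begin

theorem mainTheorem5:
  fixes X :: "'a topology" and \<N> :: "'a set set"
  assumes "continuum X"
    and "density_Baire X"
    and "\<forall>N\<in>\<N>. closedin X N \<and> nowhere_dense_in X N"
    and "\<forall>A\<in>\<N>. \<forall>B\<in>\<N>. A \<subseteq> B \<or> B \<subseteq> A"
  shows "\<Union>\<N> \<noteq> topspace X"
proof
  assume U: "\<Union>\<N> = topspace X"
  have ne: "topspace X \<noteq> {}" using assms(1) unfolding continuum_def by blast
  obtain D where Dw: "density_witness X D" and B: "card_Baire X D"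
    using assms(2) unfolding density_Baire_def by blast
  have Dd: "D \<subseteq> topspace X" "X closure_of D = topspace X"
    using Dw unfolding density_witness_def dense_in_def by auto
  define f where "f d = (SOME N. N \<in> \<N> \<and> d \<in> N)" for d
  have f: "f d \<in> \<N> \<and> d \<in> f d" if "d \<in> D" for d
  proof -
    have "\<exists>N. N \<in> \<N> \<and> d \<in> N" using that Dd U by blast
    then show ?thesis unfolding f_def by (rule someI_ex)
  qed
  have od: "openin X (topspace X - N) \<and> dense_in X (topspace X - N)" if "N \<in> \<N>" for N
  proof -
    have c: "closedin X N" and nd: "X interior_of (X closure_of N) = {}"
      using assms(3) that unfolding nowhere_dense_in_def by auto
    have "X interior_of N \<subseteq> X interior_of (X closure_of N)"
      by (meson closure_of_subset closedin_subset c interior_of_mono)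
    then have "X interior_of N = {}" using nd by blast
    then show ?thesis using c
      by (auto simp: dense_in_def closure_of_complement)
  qed
  define F where "F = (\<lambda>d. topspace X - f d) ` D"
  have "\<forall>V\<in>F. openin X V \<and> dense_in X V" using od f unfolding F_def by blast
  moreover have "ordLeq3 (card_of F) (card_of D)" unfolding F_def by (rule card_of_image)
  ultimately have "dense_in X (topspace X \<inter> \<Inter>F)" using B unfolding card_Baire_def by blast
  then have "topspace X \<inter> \<Inter>F \<noteq> {}" using ne unfolding dense_in_def by (metis closure_of_empty)
  then obtain x where x: "x \<in> topspace X" "x \<in> \<Inter>F" by blast
  then obtain N where N: "N \<in> \<N>" "x \<in> N" using U by blast
  have "D \<subseteq> N"
  proof
    fix d assume d: "d \<in> D"
    have "x \<notin> f d" using x d unfolding F_def by blast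
    then have "\<not> N \<subseteq> f d" using N by blast
    then have "f d \<subseteq> N" using assms(4) N f d by blast
    then show "d \<in> N" using f d by blast
  qed
  have c: "closedin X N" and nd: "X interior_of (X closure_of N) = {}"
    using assms(3) N unfolding nowhere_dense_in_def by auto
  have "X closure_of D \<subseteq> N" using \<open>D \<subseteq> N\<close> c by (simp add: closure_of_minimal)
  then have "N = topspace X" using Dd c closedin_subset by blast
  then show False using nd ne by simp
qed

end
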